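(* For all homogeneous $\varphi_1,\varphi_2,\psi\in CC^\bullet(\mathscr A)[1]$, as operators on $CC_\bullet(\mathscr A)[1]$: $\rho_{[\varphi_1,\varphi_2],\psi}-\rho_{\varphi_1,[\varphi_2,\psi]}+(-1)^{|\varphi_1|'|\varphi_2|'}\rho_{\varphi_2,[\varphi_1,\psi]}=[\mathcal L_{\varphi_1},\rho_{\varphi_2,\psi}]-(-1)^{|\varphi_1|'|\varphi_2|'}[\mathcal L_{\varphi_2},\rho_{\varphi_1,\psi}]$, where on the right $[\cdot,\cdot]$ is the graded commutator ($\mathcal L_\varphi$ has degree $|\varphi|'$, $\rho_{\varphi,\psi}$ has degree $|\varphi|'+|\psi|'$).
   Context: $R$ a graded-commutative ring containing $\mathbb Q$. $\mathscr A$: a set of objects with graded $R$-modules $\mathrm{Hom}_{\mathscr A}(X,Y)$. Set $\mathscr A(X_0,\dots,X_k):=\mathrm{Hom}(X_0,X_1)[1]\otimes\cdots\otimes\mathrm{Hom}(X_{k-1},X_k)[1]$; for $x$ in a shifted Hom, $|x|'$ denotes its shifted degree. $CC^\bullet(\mathscr A)=\prod_{X_0,\dots,X_k}\mathrm{Hom}_R(\mathscr A(X_0,\dots,X_k),\mathrm{Hom}(X_0,X_k))$ (graded), $CC_\bullet(\mathscr A)=\bigoplus\mathrm{Hom}(X_0,X_1)\otimes\mathscr A(X_1,\dots,X_k,X_0)$; elements of $CC_\bullet(\mathscr A)[1]$ are written $\mathbb X=x_0\otimes\cdots\otimes x_k$ with all $x_i$ in shifted Homs. For $\varphi\in CC^\bullet(\mathscr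 A)[1]$, $|\varphi|'$ denotes its degree in $CC^\bullet(\mathscr A)[1]$ (i.e. as a map of shifted spaces $\mathscr A(\cdots)\to\mathrm{Hom}[1]$). Operations: $(\varphi\circ\psi)(x_1,\dots,x_k)=\sum_{0\le i\le j\le k}(-1)^{|\psi|'(|x_1|'+\cdots+|x_i|')}\varphi(x_1,\dots,x_i,\psi(x_{i+1},\dots,x_j),x_{j+1},\dots,x_k)$; $[\varphi,\psi]=\varphi\circ\psi-(-1)^{|\varphi|'|\psi|'}\psi\circ\varphi$; $\mathcal L_\varphi(\mathbb X)=\sum_{0\le i\le j\le k}(-1)^{|\varphi|'(|x_0|'+\cdots+|x_i|')}x_0\otimes\cdots\otimes x_i\otimes\varphi(x_{i+1},\dots,x_j)\otimes x_{j+1}\otimes\cdots\otimes x_k+\sum_{0\le i\le j\le k}(-1)^{(|x_0|'+\cdots+|x_j|')(|x_{j+1}|'+\cdots+|x_k|')}\varphi(x_{j+1},\dots,x_k,x_0,\dots,x_i)\otimes x_{i+1}\otimes\cdots\otimes x_j$; $\rho_{\varphi,\psi}(\mathbb X)=\sum_{0\le i\le j\le s\le t\le k}(-1)^{\#}\varphi(x_{j+1},\dots,x_s,\psi(x_{s+1},\dots,x_t),x_{t+1},\dots,x_k,x_0,\dots,x_i)\otimes x_{i+1}\otimes\cdots\otimes x_j$, $\#=|\psi|'(|x_{j+1}|'+\cdots+|x_s|')+(|x_0|'+\cdots+|x_j|')(|x_{j+1}|'+\cdots+|x_k|')$. *)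

theory Defs
  imports Main "HOL-Library.Poly_Mapping"
begin

text \<open>H X Y d is the degree-d part of the shifted space Hom(X,Y)[1] (so degrees
are the shifted degrees |x|').  A homogeneous element of a shifted Hom is
recorded as a letter: source, target, shifted degree, value.\<close>

record ('o, 'm) letter =
  lsrc :: 'o
  ltgt :: 'o
  ldeg :: int
  lval :: 'm

definition graded_homs :: "('o \<Rightarrow> 'o \<Rightarrow> int \<Rightarrow> 'm::ab_group_add set) \<Rightarrow> bool" where
  "graded_homs H \<longleftrightarrow> (\<forall>X Y d. 0 \<in> H X Y d \<and> (\<forall>a\<in>H X Y d. \<forall>b\<in>H X Y d. a + b \<in> H X Y d)
                                \<and> (\<forall>a\<in>H X Y d. - a \<in> H X Y d))"

definition valid_letter :: "('o \<Rightarrow> 'o \<Rightarrow> int \<Rightarrow> 'm set) \<Rightarrow> ('o, 'm) letter \<Rightarrow> bool" where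
  "valid_letter H w \<longleftrightarrow> lval w \<in> H (lsrc w) (ltgt w) (ldeg w)"

fun chain_from :: "'o \<Rightarrow> ('o, 'm) letter list \<Rightarrow> bool" where
  "chain_from X0 [] = True"
| "chain_from X0 (w # ws) = (lsrc w = X0 \<and> chain_from (ltgt w) ws)"

definition valid_word :: "('o \<Rightarrow> 'o \<Rightarrow> int \<Rightarrow> 'm set) \<Rightarrow> 'o \<Rightarrow> ('o, 'm) letter list \<Rightarrow> bool" where
  "valid_word H X0 ws \<longleftrightarrow> chain_from X0 ws \<and> (\<forall>w\<in>set ws. valid_letter H w)"

text \<open>A valid elementary tensor x_0 \<otimes> ... \<otimes> x_k of CC_\<bullet>[1] (cyclically composable, k \<ge> 0).\<close>
definition cyc_word :: "('o \<Rightarrow> 'o \<Rightarrow> int \<Rightarrow> 'm set) \<Rightarrow> ('o, 'm) letter list \<Rightarrow> bool" where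
  "cyc_word H X \<longleftrightarrow> X \<noteq> [] \<and> valid_word H (lsrc (hd X)) X \<and> ltgt (last X) = lsrc (hd X)"

definition endpt :: "'o \<Rightarrow> ('o, 'm) letter list \<Rightarrow> 'o" where
  "endpt X0 ws = (if ws = [] then X0 else ltgt (last ws))"

definition degsum :: "('o, 'm) letter list \<Rightarrow> int" where
  "degsum ws = sum_list (map ldeg ws)"

definition slice :: "nat \<Rightarrow> nat \<Rightarrow> 'a list \<Rightarrow> 'a list" where
  "slice a b xs = take (b - a) (drop a xs)"  \<comment> \<open>entries with indices a,...,b-1\<close>

definition sg :: "int \<Rightarrow> int" where
  "sg n = (if even n then 1 else -1)"

definition sgm :: "int \<Rightarrow> 'm::ab_group_add \<Rightarrow> 'm" where
  "sgm n v = (if even n then v else - v)"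

text \<open>A cochain is given by its components \<phi>_{X_0,...,X_k}; the component with k = 0
needs the object X_0, hence the extra argument.\<close>

type_synonym ('o, 'm) cochain = "'o \<Rightarrow> ('o, 'm) letter list \<Rightarrow> 'm"

definition is_cochain :: "('o \<Rightarrow> 'o \<Rightarrow> int \<Rightarrow> 'm::ab_group_add set) \<Rightarrow> int \<Rightarrow> ('o, 'm) cochain \<Rightarrow> bool" where
  "is_cochain H d \<phi> \<longleftrightarrow>
     (\<forall>X0 ws. valid_word H X0 ws \<longrightarrow> \<phi> X0 ws \<in> H X0 (endpt X0 ws) (d + degsum ws))
   \<and> (\<forall>X0 u v w b. valid_word H X0 (u @ w # v) \<and> b \<in> H (lsrc w) (ltgt w) (ldeg w) \<longrightarrow>
        \<phi> X0 (u @ w\<lparr>lval := lval w + b\<rparr> # v) = \<phi> X0 (u @ w # v) + \<phi> X0 (u @ w\<lparr>lval := b\<rparr> # v))"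

definition app :: "int \<Rightarrow> ('o, 'm) cochain \<Rightarrow> 'o \<Rightarrow> ('o, 'm) letter list \<Rightarrow> ('o, 'm) letter" where
  "app d \<phi> X0 ws = \<lparr>lsrc = X0, ltgt = endpt X0 ws, ldeg = d + degsum ws, lval = \<phi> X0 ws\<rparr>"

definition circ :: "int \<Rightarrow> ('o, 'm::ab_group_add) cochain \<Rightarrow> ('o, 'm) cochain \<Rightarrow> ('o, 'm) cochain" where
  "circ d\<psi> \<phi> \<psi> X0 xs =
     (\<Sum>i\<in>{0..length xs}. \<Sum>j\<in>{i..length xs}.
        sgm (d\<psi> * degsum (take i xs))
          (\<phi> X0 (take i xs @ [app d\<psi> \<psi> (endpt X0 (take i xs)) (slice i j xs)] @ drop j xs)))"

definition br :: "int \<Rightarrow> int \<Rightarrow> ('o, 'm::ab_group_add) cochain \<Rightarrow> ('o, 'm) cochain \<Rightarrow> ('o, 'm) cochain" where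
  "br d\<phi> d\<psi> \<phi> \<psi> X0 xs = circ d\<psi> \<phi> \<psi> X0 xs - sgm (d\<phi> * d\<psi>) (circ d\<phi> \<psi> \<phi> X0 xs)"

text \<open>Operators on CC_\<bullet>[1] are given on elementary tensors (words) as formal
integer combinations of elementary tensors (lists of (coefficient, word)).
The chain group is the free abelian group on words modulo the multilinearity
relations, i.e. the tensor product.\<close>

type_synonym ('o, 'm) terms = "(int \<times> ('o, 'm) letter list) list"

definition chain :: "('o, 'm) terms \<Rightarrow> (('o, 'm) letter list \<Rightarrow>\<^sub>0 int)" where
  "chain ts = (\<Sum>(c, w)\<leftarrow>ts. Poly_Mapping.single w c)"

definition scale :: "int \<Rightarrow> ('o, 'm) terms \<Rightarrow> ('o, 'm) terms" where
  "scale c ts = map (\<lambda>(c', w). (c * c', w)) ts"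

definition ext :: "(('o, 'm) letter list \<Rightarrow> ('o, 'm) terms) \<Rightarrow> ('o, 'm) terms \<Rightarrow> ('o, 'm) terms" where
  "ext f ts = concat (map (\<lambda>(c, w). scale c (f w)) ts)"

definition comm :: "int \<Rightarrow> int \<Rightarrow> (('o, 'm) letter list \<Rightarrow> ('o, 'm) terms)
                     \<Rightarrow> (('o, 'm) letter list \<Rightarrow> ('o, 'm) terms) \<Rightarrow> ('o, 'm) letter list \<Rightarrow> ('o, 'm) terms" where
  "comm df dg f g X = ext f (g X) @ scale (- sg (df * dg)) (ext g (f X))"

definition Lie :: "int \<Rightarrow> ('o, 'm) cochain \<Rightarrow> ('o, 'm) letter list \<Rightarrow> ('o, 'm) terms" where
  "Lie d \<phi> X =
     [(sg (d * degsum (take (i+1) X)),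
       take (i+1) X @ [app d \<phi> (ltgt (X!i)) (slice (i+1) (j+1) X)] @ drop (j+1) X).
        i \<leftarrow> [0..<length X], j \<leftarrow> [i..<length X]]
   @ [(sg (degsum (take (j+1) X) * degsum (drop (j+1) X)),
       app d \<phi> (ltgt (X!j)) (drop (j+1) X @ take (i+1) X) # slice (i+1) (j+1) X).
        i \<leftarrow> [0..<length X], j \<leftarrow> [i..<length X]]"

definition rho :: "int \<Rightarrow> int \<Rightarrow> ('o, 'm) cochain \<Rightarrow> ('o, 'm) cochain \<Rightarrow> ('o, 'm) letter list \<Rightarrow> ('o, 'm) terms" where
  "rho d\<phi> d\<psi> \<phi> \<psi> X =
     [(sg (d\<psi> * degsum (slice (j+1) (s+1) X) + degsum (take (j+1) X) * degsum (drop (j+1) X)),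
       app d\<phi> \<phi> (ltgt (X!j))
           (slice (j+1) (s+1) X @ [app d\<psi> \<psi> (ltgt (X!s)) (slice (s+1) (t+1) X)]
            @ drop (t+1) X @ take (i+1) X)
         # slice (i+1) (j+1) X).
        i \<leftarrow> [0..<length X], j \<leftarrow> [i..<length X], s \<leftarrow> [j..<length X], t \<leftarrow> [s..<length X]]"

inductive_set tensor_rel :: "('o \<Rightarrow> 'o \<Rightarrow> int \<Rightarrow> 'm::ab_group_add set) \<Rightarrow> (('o, 'm) letter list \<Rightarrow>\<^sub>0 int) set"
  for H where
  gen: "cyc_word H (u @ w # v) \<Longrightarrow> b \<in> H (lsrc w) (ltgt w) (ldeg w) \<Longrightarrow>
        Poly_Mapping.single (u @ w\<lparr>lval := lval w + b\<rparr> # v) 1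
          - Poly_Mapping.single (u @ w # v) 1 - Poly_Mapping.single (u @ w\<lparr>lval := b\<rparr> # v) 1
        \<in> tensor_rel H"
| zero: "0 \<in> tensor_rel H"
| add: "x \<in> tensor_rel H \<Longrightarrow> y \<in> tensor_rel H \<Longrightarrow> x + y \<in> tensor_rel H"
| neg: "x \<in> tensor_rel H \<Longrightarrow> - x \<in> tensor_rel H"

end

theory Submission
  imports Defs
begin


definition D2 :: "'a list \<Rightarrow> ('a list \<times> 'a list) set" where
  "D2 Y = {(a,b). Y = a @ b}"
definition D3 :: "'a list \<Rightarrow> ('a list \<times> 'a list \<times> 'a list) set" where
  "D3 Y = {(a,b,c). Y = a @ b @ c}"
definition D4 :: "'a list \<Rightarrow> ('a list \<times> 'a list \<times> 'a list \<times> 'a list) set" where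
  "D4 Y = {(a,b,c,d). Y = a @ b @ c @ d}"
definition D5 :: "'a list \<Rightarrow> ('a list \<times> 'a list \<times> 'a list \<times> 'a list \<times> 'a list) set" where
  "D5 Y = {(a,b,c,d,e). Y = a @ b @ c @ d @ e}"

definition infx :: "'a list \<Rightarrow> 'a list set" where
  "infx Y = {xs. \<exists>a b. Y = a @ xs @ b}"

lemma finite_infx: "finite (infx Y)"
proof -
  have "infx Y \<subseteq> {xs. set xs \<subseteq> set Y \<and> length xs \<le> length Y}"
    unfolding infx_def by auto
  moreover have "finite {xs. set xs \<subseteq> set Y \<and> length xs \<le> length Y}"
    using finite_lists_length_le[of "set Y" "length Y"] by simp
  ultimately show ?thesis by (rule finite_subset)
qed

lemma infx_I1: "Y = a @ b \<Longrightarrow> a \<in> infx Y" unfolding infx_def by force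
lemma infx_I2: "Y = a @ b \<Longrightarrow> b \<in> infx Y" unfolding infx_def by force
lemma infx_I3: "Y = a @ b @ c \<Longrightarrow> b \<in> infx Y" unfolding infx_def by force

lemma finite_D2[simp]: "finite (D2 Y)"
  by (rule finite_subset[of _ "infx Y \<times> infx Y"]) (auto simp: D2_def intro: infx_I1 infx_I2 finite_infx)
lemma finite_D3[simp]: "finite (D3 Y)"
  apply (rule finite_subset[of _ "infx Y \<times> infx Y \<times> infx Y"])
   apply (auto simp: D3_def intro!: finite_infx)
   apply (metis append.assoc infx_I1) apply (metis infx_I3) apply (metis append.assoc infx_I2)
  done
lemma finite_D4[simp]: "finite (D4 Y)"
  apply (rule finite_subset[of _ "infx Y \<times> infx Y \<times> infx Y \<times> infx Y"])
   apply (auto simp: D4_def intro!: finite_infx)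
     apply (metis append.assoc infx_I1) apply (metis infx_I3) apply (metis append.assoc infx_I3)
   apply (metis append.assoc infx_I2)
  done
lemma finite_D5[simp]: "finite (D5 Y)"
  apply (rule finite_subset[of _ "infx Y \<times> infx Y \<times> infx Y \<times> infx Y \<times> infx Y"])
   apply (auto simp: D5_def intro!: finite_infx)
     apply (metis append.assoc infx_I1) apply (metis infx_I3) apply (metis append.assoc infx_I3)
   apply (metis append.assoc infx_I3) apply (metis append.assoc infx_I2)
  done

lemma app_split_cases:
  assumes "p @ q = x @ m # y"
  shows "(\<exists>s. x = p @ s \<and> q = s @ m # y) \<or> (\<exists>s. p = x @ m # s \<and> y = s @ q)"
proof -
  from assms obtain us where "(p = x @ us \<and> us @ q = m # y) \<or> (p @ us = x \<and> q = us @ m # y)"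
    by (auto simp: append_eq_append_conv2)
  then show ?thesis
  proof
    assume h: "p = x @ us \<and> us @ q = m # y"
    show ?thesis
    proof (cases us)
      case Nil then show ?thesis using h by auto
    next
      case (Cons a s) then show ?thesis using h by auto
    qed
  qed auto
qed

lemma SPLIT2:
  "(\<Sum>(p,q)\<in>D2 (x @ m # y). f p q) = (\<Sum>(p,q)\<in>D2 x. f p (q @ m # y)) + (\<Sum>(p,q)\<in>D2 y. f (x @ m # p) q)"
proof -
  let ?g1 = "\<lambda>(p,q). (p, q @ m # y)" and ?g2 = "\<lambda>(p,q). (x @ m # p, q)"
  have eq: "D2 (x @ m # y) = ?g1 ` D2 x \<union> ?g2 ` D2 y"
  proof
    show "D2 (x @ m # y) \<subseteq> ?g1 ` D2 x \<union> ?g2 ` D2 y"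
    proof
      fix z assume "z \<in> D2 (x @ m # y)"
      then obtain p q where z: "z = (p,q)" "p @ q = x @ m # y" by (auto simp: D2_def)
      from app_split_cases[OF z(2)] show "z \<in> ?g1 ` D2 x \<union> ?g2 ` D2 y"
        by (auto simp: D2_def z(1) image_iff)
    qed
  qed (auto simp: D2_def)
  have disj: "?g1 ` D2 x \<inter> ?g2 ` D2 y = {}"
    by (auto simp: D2_def dest: arg_cong[of _ _ length])
  have i1: "inj_on ?g1 (D2 x)" by (auto simp: inj_on_def D2_def)
  have i2: "inj_on ?g2 (D2 y)" by (auto simp: inj_on_def D2_def)
  show ?thesis
    unfolding eq
    apply (subst sum.union_disjoint) 
    using disj apply (auto simp: finite_imageI)[3]
    apply (subst sum.reindex[OF i1]) apply (subst sum.reindex[OF i2])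
    apply (simp add: case_prod_beta)
    done
qed




lemma NEST3: "(\<Sum>(a,b,c)\<in>D3 Y. f a b c) = (\<Sum>(a,r)\<in>D2 Y. \<Sum>(b,c)\<in>D2 r. f a b c)"
  apply (simp add: sum.Sigma split_def)
  apply (rule sum.reindex_bij_witness[where i="\<lambda>((a,r),(b,c)). (a,b,c)" and j="\<lambda>(a,b,c). ((a,b@c),(b,c))"])
  apply (auto simp: D2_def D3_def)
  done

lemma NEST4: "(\<Sum>(a,b,c,d)\<in>D4 Y. f a b c d) = (\<Sum>(a,r)\<in>D2 Y. \<Sum>(b,c,d)\<in>D3 r. f a b c d)"
  apply (simp add: sum.Sigma split_def)
  apply (rule sum.reindex_bij_witness[where i="\<lambda>((a,r),(b,c,d)). (a,b,c,d)" and j="\<lambda>(a,b,c,d). ((a,b@c@d),(b,c,d))"])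
  apply (auto simp: D2_def D3_def D4_def)
  done

lemma NEST5: "(\<Sum>(a,b,c,d,e)\<in>D5 Y. f a b c d e) = (\<Sum>(a,r)\<in>D2 Y. \<Sum>(b,c,d,e)\<in>D4 r. f a b c d e)"
  apply (simp add: sum.Sigma split_def)
  apply (rule sum.reindex_bij_witness[where i="\<lambda>((a,r),(b,c,d,e)). (a,b,c,d,e)" and j="\<lambda>(a,b,c,d,e). ((a,b@c@d@e),(b,c,d,e))"])
  apply (auto simp: D2_def D4_def D5_def)
  done

lemma SPLIT3:
  "(\<Sum>(p,q,r)\<in>D3 (x @ m # y). f p q r) = (\<Sum>(p,q,r)\<in>D3 x. f p q (r @ m # y))
     + (\<Sum>(p,q1)\<in>D2 x. \<Sum>(q2,r)\<in>D2 y. f p (q1 @ m # q2) r) + (\<Sum>(p,q,r)\<in>D3 y. f (x @ m # p) q r)"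
  by (simp only: NEST3 SPLIT2) (simp add: split_def sum.distrib add.assoc)

lemma SPLIT4:
  "(\<Sum>(a,b,c,d)\<in>D4 (x @ m # y). f a b c d) = (\<Sum>(a,b,c,p)\<in>D4 x. f a b c (p @ m # y))
     + (\<Sum>(a,b,p)\<in>D3 x. \<Sum>(q,d)\<in>D2 y. f a b (p @ m # q) d)
     + (\<Sum>(a,p)\<in>D2 x. \<Sum>(q,c,d)\<in>D3 y. f a (p @ m # q) c d)
     + (\<Sum>(q,b,c,d)\<in>D4 y. f (x @ m # q) b c d)"
  apply (simp only: NEST4 SPLIT2 SPLIT3) apply (simp only: NEST3) by (simp add: split_def sum.distrib add.assoc)

lemma SPLIT5:
  "(\<Sum>(a,b,c,d,e)\<in>D5 (x @ m # y). f a b c d e) = (\<Sum>(a,b,c,d,p)\<in>D5 x. f a b c d (p @ m # y))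
     + (\<Sum>(a,b,c,p)\<in>D4 x. \<Sum>(q,e)\<in>D2 y. f a b c (p @ m # q) e)
     + (\<Sum>(a,b,p)\<in>D3 x. \<Sum>(q,d,e)\<in>D3 y. f a b (p @ m # q) d e)
     + (\<Sum>(a,p)\<in>D2 x. \<Sum>(q,c,d,e)\<in>D4 y. f a (p @ m # q) c d e)
     + (\<Sum>(q,b,c,d,e)\<in>D5 y. f (x @ m # q) b c d e)"
  apply (simp only: NEST5 SPLIT2 SPLIT4) apply (simp only: NEST4 NEST3) by (simp add: split_def sum.distrib add.assoc)




lemma IDX2: "(\<Sum>i<Suc (length Y). \<Sum>j\<in>{i..<Suc (length Y)}. g i j) = (\<Sum>(a,b,c)\<in>D3 Y. g (length a) (length a + length b))"
proof -
  have "(\<Sum>i<Suc (length Y). \<Sum>j\<in>{i..<Suc (length Y)}. g i j) = (\<Sum>(i,j)\<in>Sigma {..<Suc (length Y)} (\<lambda>i. {i..<Suc (length Y)}). g i j)"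
    by (rule sum.Sigma) auto
  also have "\<dots> = (\<Sum>(a,b,c)\<in>D3 Y. g (length a) (length a + length b))"
  apply (rule sum.reindex_bij_witness[where i="\<lambda>(a,b,c). (length a, length a + length b)"
        and j="\<lambda>(i,j). (take i Y, take (j-i) (drop i Y), drop j Y)"])
  apply (auto simp: D3_def min_def)
  apply (metis add.commute append_take_drop_id drop_drop le_add_diff_inverse2)
  apply (rule arg_cong2[where f=g]; linarith)+
  done
  finally show ?thesis .
qed

lemma FLAT4: "(\<Sum>i<(n::nat). \<Sum>j\<in>{i..<n}. \<Sum>s\<in>{j..<n}. \<Sum>t\<in>{s..<n}. g i j s t)
   = (\<Sum>(i,j,s,t)\<in>Sigma {..<n} (\<lambda>i. Sigma {i..<n} (\<lambda>j. Sigma {j..<n} (\<lambda>s. {s..<n}))). g i j s t)"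
  by (simp add: sum.Sigma)
lemma take_drop_app: "a \<le> b \<Longrightarrow> take (b - a) (drop a Y) @ drop b Y = drop a Y"
  by (metis add.commute append_take_drop_id drop_drop le_add_diff_inverse2)

lemma IDX4: "(\<Sum>i<Suc (length Y). \<Sum>j\<in>{i..<Suc (length Y)}. \<Sum>s\<in>{j..<Suc (length Y)}. \<Sum>t\<in>{s..<Suc (length Y)}. g i j s t)
   = (\<Sum>(a,b,c,d,e)\<in>D5 Y. g (length a) (length a + length b) (length a + length b + length c) (length a + length b + length c + length d))"
  unfolding FLAT4
  apply (rule sum.reindex_bij_witness[where i="\<lambda>(a,b,c,d,e). (length a, length a + length b, length a + length b + length c, length a + length b + length c + length d)"
        and j="\<lambda>(i,j,s,t). (take i Y, take (j-i) (drop i Y), take (s-j) (drop j Y), take (t-s) (drop s Y), drop t Y)"])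
  apply (auto simp: D5_def take_drop_app)
  done

definition tg :: "('o,'m) letter list \<Rightarrow> 'o" where "tg xs = ltgt (last xs)"

lemma chain_Nil[simp]: "chain [] = 0" by (simp add: chain_def)
lemma chain_append[simp]: "chain (xs @ ys) = chain xs + chain ys" by (simp add: chain_def)
lemma chain_Cons[simp]: "chain (t # ts) = Poly_Mapping.single (snd t) (fst t) + chain ts"
  by (simp add: chain_def split_def)
lemma chain_concat: "chain (concat xss) = sum_list (map chain xss)"
  by (induct xss) auto
lemma chain_map: "chain (map (\<lambda>t. (c t, w t)) xs) = sum_list (map (\<lambda>t. Poly_Mapping.single (w t) (c t)) xs)"
  by (induct xs) auto

lemma nth_last: "(w0 # p @ q) ! length p = last (w0 # p)"
  by (induct p arbitrary: w0) (auto simp: nth_append)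

lemma nthL1: "(w0 # a @ q) ! (length a) = last (w0 # a)"
  by (rule nth_last)
lemma nthL2: "(w0 # a @ b @ q) ! (length a + length b) = last (w0 # a @ b)"
  using nth_last[of w0 "a@b" q] by simp
lemma nthL3: "(w0 # a @ b @ c @ q) ! (length a + length b + length c) = last (w0 # a @ b @ c)"
  using nth_last[of w0 "a@b@c" q] by (simp add: add.assoc)

lemma sl_concat: "sum_list (map f (concat xss)) = sum_list (map (\<lambda>xs. sum_list (map f xs)) xss)"
  by (induct xss) auto

lemma sl_concat2: "sum_list (concat xss) = sum_list (map sum_list xss)"
  by (induct xss) auto

lemma RHO_gen: "sum_list (map (\<lambda>t. G (fst t) (snd t)) (rho dp dq p q (w0 # Y))) = (\<Sum>(u,v,c1,c2,c3)\<in>D5 Y.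
   G (sg (dq * degsum c1 + degsum (w0#u@v) * degsum (c1@c2@c3)))
    (app dp p (tg (w0#u@v)) (c1 @ app dq q (tg (w0#u@v@c1)) c2 # c3 @ w0 # u) # v))"
  unfolding rho_def
  apply (simp only: sl_concat sl_concat2 map_concat map_map o_def interv_sum_list_conv_sum_set_nat set_upt fst_conv snd_conv)
  apply (simp only: length_Cons flip: lessThan_atLeast0)
  apply (subst IDX4)
  apply (rule sum.cong[OF refl])
  apply (clarsimp simp: D5_def)
  apply (simp only: nthL2 nthL3 flip: tg_def)
  apply (simp add: slice_def)
  done

lemma LIE_gen: "sum_list (map (\<lambda>t. G (fst t) (snd t)) (Lie d p (w0 # Y))) =
   (\<Sum>(x,y,z)\<in>D3 Y. G (sg (d * degsum (w0 # x))) ((w0 # x) @ app d p (tg (w0 # x)) y # z))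
 + (\<Sum>(x,y,z)\<in>D3 Y. G (sg (degsum (w0 # x @ y) * degsum z)) (app d p (tg (w0 # x @ y)) (z @ w0 # x) # y))"
  unfolding Lie_def
  apply (simp only: sl_concat sl_concat2 map_concat map_map o_def interv_sum_list_conv_sum_set_nat set_upt fst_conv snd_conv map_append sum_list_append)
  apply (simp only: length_Cons flip: lessThan_atLeast0)
  apply (subst IDX2)+
  apply (rule arg_cong2[where f="(+)"]; rule sum.cong[OF refl])
   apply (clarsimp simp: D3_def)
   apply (simp only: nthL1 nthL2 flip: tg_def)
   apply (simp add: slice_def)
  apply (clarsimp simp: D3_def)
  apply (simp only: nthL1 nthL2 flip: tg_def)
  apply (simp add: slice_def)
  done




definition sgp :: "int \<Rightarrow> ('a \<Rightarrow>\<^sub>0 int) \<Rightarrow> ('a \<Rightarrow>\<^sub>0 int)" where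
  "sgp k x = (if even k then x else - x)"
definition S :: "'a \<Rightarrow> ('a \<Rightarrow>\<^sub>0 int)" where "S w = Poly_Mapping.single w 1"

lemma single_sg: "Poly_Mapping.single w (sg k) = sgp k (S w)"
  by (simp add: sg_def sgp_def S_def single_uminus)
lemma chain_eq: "chain ts = sum_list (map (\<lambda>t. Poly_Mapping.single (snd t) (fst t)) ts)"
  by (simp add: chain_def split_def)
lemma chain_scale_sg: "chain (scale (sg k) ts) = sgp k (chain ts)"
  by (induct ts) (auto simp: scale_def sg_def sgp_def single_uminus)
lemma chain_ext: "chain (ext f ts) = sum_list (map (\<lambda>t. chain (scale (fst t) (f (snd t)))) ts)"
  by (induct ts) (auto simp: ext_def split_def)
lemma neg_sg: "- sg k = sg (k + 1)" by (simp add: sg_def)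
lemma chain_comm: "chain (comm df dg f g X) = chain (ext f (g X)) - sgp (df * dg) (chain (ext g (f X)))"
  by (simp add: comm_def neg_sg chain_scale_sg sgp_def)

lemma sgp_sum: "sgp k (sum f A) = (\<Sum>x\<in>A. sgp k (f x))"
  by (simp add: sgp_def sum_negf)
lemma sgp_add: "sgp k (x + y) = sgp k x + sgp k y" by (simp add: sgp_def)
lemma sgp_diff: "sgp k (x - y) = sgp k x - sgp k y" by (simp add: sgp_def)
lemma sgp_sgp: "sgp a (sgp b x) = sgp (a + b) x" by (simp add: sgp_def)
lemma sgp_zero[simp]: "sgp k 0 = 0" by (simp add: sgp_def)
lemma sgp_cong: "even a = even b \<Longrightarrow> sgp a x = sgp b x" by (simp add: sgp_def)

definition gR :: "int \<Rightarrow> ('o,'m) cochain \<Rightarrow> int \<Rightarrow> ('o,'m) cochain \<Rightarrow> ('o,'m) letter \<Rightarrow> ('o,'m) letter list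
   \<Rightarrow> ('o,'m) letter list \<Rightarrow> ('o,'m) letter list \<Rightarrow> ('o,'m) letter list \<Rightarrow> ('o,'m) letter list \<Rightarrow> (('o,'m) letter list \<Rightarrow>\<^sub>0 int)" where
  "gR dp p dq q w u v c1 c2 c3 = sgp (dq * degsum c1 + degsum (w#u@v) * degsum (c1@c2@c3))
     (S (app dp p (tg (w#u@v)) (c1 @ app dq q (tg (w#u@v@c1)) c2 # c3 @ w # u) # v))"

definition lA :: "int \<Rightarrow> ('o,'m) cochain \<Rightarrow> ('o,'m) letter \<Rightarrow> ('o,'m) letter list
   \<Rightarrow> ('o,'m) letter list \<Rightarrow> ('o,'m) letter list \<Rightarrow> (('o,'m) letter list \<Rightarrow>\<^sub>0 int)" where
  "lA d p w x y z = sgp (d * degsum (w # x)) (S ((w # x) @ app d p (tg (w # x)) y # z))"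
definition lB :: "int \<Rightarrow> ('o,'m) cochain \<Rightarrow> ('o,'m) letter \<Rightarrow> ('o,'m) letter list
   \<Rightarrow> ('o,'m) letter list \<Rightarrow> ('o,'m) letter list \<Rightarrow> (('o,'m) letter list \<Rightarrow>\<^sub>0 int)" where
  "lB d p w x y z = sgp (degsum (w # x @ y) * degsum z) (S (app d p (tg (w # x @ y)) (z @ w # x) # y))"

lemma RHO_chain: "chain (rho dp dq p q (w0 # Y)) = (\<Sum>(u,v,c1,c2,c3)\<in>D5 Y. gR dp p dq q w0 u v c1 c2 c3)"
  unfolding chain_eq using RHO_gen[where G="\<lambda>c w. Poly_Mapping.single w c"] by (simp add: single_sg gR_def)

lemma LIE_chain: "chain (Lie d p (w0 # Y)) = (\<Sum>(x,y,z)\<in>D3 Y. lA d p w0 x y z) + (\<Sum>(x,y,z)\<in>D3 Y. lB d p w0 x y z)"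
  unfolding chain_eq using LIE_gen[where G="\<lambda>c w. Poly_Mapping.single w c"] by (simp add: single_sg lA_def lB_def)

lemma RHO_ext: "chain (ext f (rho dp dq p q (w0 # Y))) = (\<Sum>(u,v,c1,c2,c3)\<in>D5 Y.
   sgp (dq * degsum c1 + degsum (w0#u@v) * degsum (c1@c2@c3))
    (chain (f (app dp p (tg (w0#u@v)) (c1 @ app dq q (tg (w0#u@v@c1)) c2 # c3 @ w0 # u) # v))))"
  unfolding chain_ext using RHO_gen[where G="\<lambda>c w. chain (scale c (f w))"] by (simp add: chain_scale_sg)

lemma LIE_ext: "chain (ext f (Lie d p (w0 # Y))) =
   (\<Sum>(x,y,z)\<in>D3 Y. sgp (d * degsum (w0 # x)) (chain (f ((w0 # x) @ app d p (tg (w0 # x)) y # z))))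
 + (\<Sum>(x,y,z)\<in>D3 Y. sgp (degsum (w0 # x @ y) * degsum z) (chain (f (app d p (tg (w0 # x @ y)) (z @ w0 # x) # y))))"
  unfolding chain_ext using LIE_gen[where G="\<lambda>c w. chain (scale c (f w))"] by (simp add: chain_scale_sg)




type_synonym ('o,'m) ch = "('o,'m) letter list \<Rightarrow>\<^sub>0 int"

definition fC :: "int \<Rightarrow> ('o,'m) cochain \<Rightarrow> int \<Rightarrow> ('o,'m) cochain \<Rightarrow> 'o \<Rightarrow> ('o,'m) letter list
   \<Rightarrow> ('o,'m) letter list \<Rightarrow> ('o,'m) letter list \<Rightarrow> ('o,'m) letter list \<Rightarrow> ('o,'m) ch" where
  "fC da a db b Ob v p m r = sgp (db * degsum p) (S (app da a Ob (p @ app db b (endpt Ob p) m # r) # v))"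

definition CIRC :: "int \<Rightarrow> ('o,'m) cochain \<Rightarrow> int \<Rightarrow> ('o,'m) cochain \<Rightarrow> 'o \<Rightarrow> ('o,'m) letter list
   \<Rightarrow> (('o,'m) letter \<Rightarrow> ('o,'m) letter list) \<Rightarrow> ('o,'m) ch" where
  "CIRC da a db b Ob Z K = (\<Sum>(p,m,r)\<in>D3 Z. sgp (db * degsum p) (S (K (app da a Ob (p @ app db b (endpt Ob p) m # r)))))"

context
  fixes da :: int and a :: "('o,'m) cochain" and db :: int and b :: "('o,'m) cochain"
    and e :: int and q :: "('o,'m) cochain" and w0 :: "('o,'m) letter" and Y :: "('o,'m) letter list"
begin

definition "EL1H = (\<Sum>(u,v,c1,c2,c3)\<in>D5 Y. sgp (e * degsum c1 + degsum (w0#u@v) * degsum (c1@c2@c3))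
   (CIRC da a db b (tg (w0#u@v)) (c1 @ app e q (tg (w0#u@v@c1)) c2 # c3 @ w0 # u) (\<lambda>L. L # v)))"

definition "Ha = (\<Sum>(u,v,c1,c2,c3)\<in>D5 Y. sgp (e * degsum c1 + degsum (w0#u@v) * degsum (c1@c2@c3))
   (\<Sum>(p,m,r)\<in>D3 c1. fC da a db b (tg (w0#u@v)) v p m (r @ app e q (tg (w0#u@v@c1)) c2 # c3 @ w0 # u)))"
definition "Hb = (\<Sum>(u,v,c1,c2,c3)\<in>D5 Y. sgp (e * degsum c1 + degsum (w0#u@v) * degsum (c1@c2@c3))
   (\<Sum>(p,m)\<in>D2 c1. \<Sum>(s,t)\<in>D2 c3. fC da a db b (tg (w0#u@v)) v p (m @ app e q (tg (w0#u@v@c1)) c2 # s) (t @ w0 # u)))"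
definition "Hc = (\<Sum>(u,v,c1,c2,c3)\<in>D5 Y. sgp (e * degsum c1 + degsum (w0#u@v) * degsum (c1@c2@c3))
   (\<Sum>(p,m)\<in>D2 c1. \<Sum>(s,t)\<in>D2 u. fC da a db b (tg (w0#u@v)) v p (m @ app e q (tg (w0#u@v@c1)) c2 # c3 @ w0 # s) t))"
definition "Hd = (\<Sum>(u,v,c1,c2,c3)\<in>D5 Y. sgp (e * degsum c1 + degsum (w0#u@v) * degsum (c1@c2@c3))
   (\<Sum>(p,m,r)\<in>D3 c3. fC da a db b (tg (w0#u@v)) v (c1 @ app e q (tg (w0#u@v@c1)) c2 # p) m (r @ w0 # u)))"
definition "He = (\<Sum>(u,v,c1,c2,c3)\<in>D5 Y. sgp (e * degsum c1 + degsum (w0#u@v) * degsum (c1@c2@c3))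
   (\<Sum>(p,m)\<in>D2 c3. \<Sum>(s,t)\<in>D2 u. fC da a db b (tg (w0#u@v)) v (c1 @ app e q (tg (w0#u@v@c1)) c2 # p) (m @ w0 # s) t))"
definition "Hf = (\<Sum>(u,v,c1,c2,c3)\<in>D5 Y. sgp (e * degsum c1 + degsum (w0#u@v) * degsum (c1@c2@c3))
   (\<Sum>(p,m,r)\<in>D3 u. fC da a db b (tg (w0#u@v)) v (c1 @ app e q (tg (w0#u@v@c1)) c2 # c3 @ w0 # p) m r))"

lemma EL1H_split: "EL1H = Ha + Hb + Hc + Hd + He + Hf"
  unfolding EL1H_def Ha_def Hb_def Hc_def Hd_def He_def Hf_def
  apply (simp only: sum.distrib[symmetric])
  apply (rule sum.cong[OF refl])
  apply (clarsimp simp only: split_paired_all case_prod_conv)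
  apply (simp only: CIRC_def SPLIT3 SPLIT2 flip: fC_def)
  apply (simp add: sgp_add sum.distrib split_def)
  done

definition "K2bp = (\<Sum>(u,v,c1,c2,c3)\<in>D5 Y. sgp ((db + e) * degsum c1 + degsum (w0#u@v) * degsum (c1@c2@c3))
   (CIRC db b e q (tg (w0#u@v@c1)) c2 (\<lambda>L. app da a (tg (w0#u@v)) (c1 @ L # c3 @ w0 # u) # v)))"
definition "K2pb = (\<Sum>(u,v,c1,c2,c3)\<in>D5 Y. sgp ((db + e) * degsum c1 + degsum (w0#u@v) * degsum (c1@c2@c3))
   (CIRC e q db b (tg (w0#u@v@c1)) c2 (\<lambda>L. app da a (tg (w0#u@v)) (c1 @ L # c3 @ w0 # u) # v)))"

definition "F1 = (\<Sum>(u,v,c1,c2,c3)\<in>D5 Y. sgp (e * degsum c1 + degsum (w0#u@v) * degsum (c1@c2@c3))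
   (\<Sum>(x,y,z)\<in>D3 v. lA da a (app db b (tg (w0#u@v)) (c1 @ app e q (tg (w0#u@v@c1)) c2 # c3 @ w0 # u)) x y z))"
definition "F2 = (\<Sum>(u,v,c1,c2,c3)\<in>D5 Y. sgp (e * degsum c1 + degsum (w0#u@v) * degsum (c1@c2@c3))
   (\<Sum>(x,y,z)\<in>D3 v. lB da a (app db b (tg (w0#u@v)) (c1 @ app e q (tg (w0#u@v@c1)) c2 # c3 @ w0 # u)) x y z))"

lemma RHS_A: "chain (ext (Lie da a) (rho db e b q (w0 # Y))) = F1 + F2"
  unfolding RHO_ext F1_def F2_def
  apply (simp only: sum.distrib[symmetric])
  apply (rule sum.cong[OF refl])
  apply (clarsimp simp only: split_paired_all case_prod_conv)
  apply (simp only: LIE_chain sgp_add)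
  done

definition "Gu = (\<Sum>(x,y,z)\<in>D3 Y. sgp (da * degsum (w0 # x))
   (\<Sum>(t,v,c1,c2,c3)\<in>D5 z. gR db b e q w0 (x @ app da a (tg (w0 # x)) y # t) v c1 c2 c3))"
definition "Gv = (\<Sum>(x,y,z)\<in>D3 Y. sgp (da * degsum (w0 # x))
   (\<Sum>(u,t)\<in>D2 x. \<Sum>(s,c1,c2,c3)\<in>D4 z. gR db b e q w0 u (t @ app da a (tg (w0 # x)) y # s) c1 c2 c3))"
definition "Gc1 = (\<Sum>(x,y,z)\<in>D3 Y. sgp (da * degsum (w0 # x))
   (\<Sum>(u,v,t)\<in>D3 x. \<Sum>(s,c2,c3)\<in>D3 z. gR db b e q w0 u v (t @ app da a (tg (w0 # x)) y # s) c2 c3))"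
definition "Gc2 = (\<Sum>(x,y,z)\<in>D3 Y. sgp (da * degsum (w0 # x))
   (\<Sum>(u,v,c1,t)\<in>D4 x. \<Sum>(s,c3)\<in>D2 z. gR db b e q w0 u v c1 (t @ app da a (tg (w0 # x)) y # s) c3))"
definition "Gc3 = (\<Sum>(x,y,z)\<in>D3 Y. sgp (da * degsum (w0 # x))
   (\<Sum>(u,v,c1,c2,t)\<in>D5 x. gR db b e q w0 u v c1 c2 (t @ app da a (tg (w0 # x)) y # z)))"
definition "GB = (\<Sum>(x,y,z)\<in>D3 Y. sgp (degsum (w0 # x @ y) * degsum z)
   (\<Sum>(u,v,c1,c2,c3)\<in>D5 y. gR db b e q (app da a (tg (w0 # x @ y)) (z @ w0 # x)) u v c1 c2 c3))"

lemma RHS_B: "chain (ext (rho db e b q) (Lie da a (w0 # Y))) = Gu + Gv + Gc1 + Gc2 + Gc3 + GB"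
  unfolding LIE_ext Gu_def Gv_def Gc1_def Gc2_def Gc3_def GB_def
  apply (simp only: append_Cons append_assoc RHO_chain SPLIT5)
  apply (simp add: sgp_add sum.distrib split_def)
  done

end




lemma degsum_Nil[simp]: "degsum [] = 0" by (simp add: degsum_def)
lemma degsum_Cons[simp]: "degsum (x # xs) = ldeg x + degsum xs" by (simp add: degsum_def)
lemma degsum_append[simp]: "degsum (xs @ ys) = degsum xs + degsum ys" by (simp add: degsum_def)
lemma ldeg_app[simp]: "ldeg (app d p Ob ws) = d + degsum ws" by (simp add: app_def)
lemma ltgt_app[simp]: "ltgt (app d p Ob ws) = endpt Ob ws" by (simp add: app_def)
lemma endpt_tg[simp]: "endpt (tg (w # xs)) p = tg (w # xs @ p)"
  by (simp add: endpt_def tg_def)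

lemma sgp_S_eq: "w1 = w2 \<Longrightarrow> even k1 = even k2 \<Longrightarrow> sgp k1 (S w1) = sgp k2 (S w2)"
  by (simp add: sgp_def)

lemma P8: "Hb da a db b e q w0 Y = K2bp da a db b e q w0 Y"
  unfolding Hb_def K2bp_def CIRC_def fC_def
  apply (simp only: sgp_sum sgp_sgp)
  apply (simp add: split_def sum.Sigma sgp_sum sgp_sgp)
  apply (rule sum.reindex_bij_witness[where
      j="\<lambda>((u,v,c1,c2,c3),((p,m),(s,t))). ((u,v,p,m@c2@s,t),(m,c2,s))" and
      i="\<lambda>((u,v,c1,c2,c3),(p,m,r)). ((u,v,c1@p,m,r@c3),((c1,p),(r,c3)))"])
  apply (auto simp: D2_def D3_def D4_def D5_def)
  apply (rule sgp_S_eq)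
   apply (simp add: endpt_def tg_def)
  apply (simp add: even_add even_mult_iff distrib_left distrib_right)
  apply argo
  done

lemma P2: "F2 da a db b e q w0 Y = Hc da a db b e q w0 Y"
  unfolding F2_def Hc_def lB_def fC_def
  apply (simp only: sgp_sum sgp_sgp)
  apply (simp add: split_def sum.Sigma sgp_sum sgp_sgp)
  apply (rule sum.reindex_bij_witness[where
      j="\<lambda>((u,v,c1,c2,c3),(x,y,z)). ((u@x, y, z@c1, c2, c3), ((z, c1),(u, x)))" and
      i="\<lambda>((U,V,C1,C2,C3),((p,m),(s,t))). ((s, t@V@p, m, C2, C3),(t, V, p))"])
  apply (auto simp: D2_def D3_def D4_def D5_def)
  apply (rule sgp_S_eq)
   apply (simp add: endpt_def tg_def)
  apply (simp add: even_add even_mult_iff distrib_left distrib_right)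
  apply argo
  done

lemma P1: "F1 da a db b e q w0 Y = sgp (da * (db + e)) (Gv da a db b e q w0 Y)"
  unfolding F1_def Gv_def lA_def gR_def
  apply (simp only: sgp_sum sgp_sgp)
  apply (simp add: split_def sum.Sigma sgp_sum sgp_sgp)
  apply (rule sum.reindex_bij_witness[where
      j="\<lambda>((u,v,c1,c2,c3),(x,y,z)). ((u@x, y, z@c1@c2@c3), ((u,x),(z,c1,c2,c3)))" and
      i="\<lambda>((X,Yy,Z),((u,t),(s,c1,c2,c3))). ((u, t@Yy@s, c1,c2,c3),(t,Yy,s))"])
  apply (auto simp: D2_def D3_def D4_def D5_def)
  apply (rule sgp_S_eq)
   apply (simp add: endpt_def tg_def)
  apply (simp add: even_add even_mult_iff distrib_left distrib_right)
  apply argo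
  done

lemma P3: "Gu da a db b e q w0 Y = sgp (da * e) (Hf db b da a e q w0 Y)"
  unfolding Gu_def Hf_def gR_def fC_def
  apply (simp only: sgp_sum sgp_sgp)
  apply (simp add: split_def sum.Sigma sgp_sum sgp_sgp)
  apply (rule sum.reindex_bij_witness[where
      j="\<lambda>((X,Yy,Z),(t,v,c1,c2,c3)). ((X@Yy@t, v, c1, c2, c3),(X,Yy,t))" and
      i="\<lambda>((U,V,C1,C2,C3),(p,m,r)). ((p,m,r@V@C1@C2@C3),(r,V,C1,C2,C3))"])
  apply (auto simp: D2_def D3_def D4_def D5_def)
  apply (rule sgp_S_eq)
   apply (simp add: endpt_def tg_def)
  apply (simp add: even_add even_mult_iff distrib_left distrib_right)
  apply argo
  done

lemma P4: "Gc1 da a db b e q w0 Y = sgp (da * e) (Ha db b da a e q w0 Y)"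
  unfolding Gc1_def Ha_def gR_def fC_def
  apply (simp only: sgp_sum sgp_sgp)
  apply (simp add: split_def sum.Sigma sgp_sum sgp_sgp)
  apply (rule sum.reindex_bij_witness[where
      j="\<lambda>((X,Yy,Z),((u,v,t),(s,c2,c3))). ((u,v,t@Yy@s,c2,c3),(t,Yy,s))" and
      i="\<lambda>((U,V,C1,C2,C3),(p,m,r)). ((U@V@p, m, r@C2@C3),((U,V,p),(r,C2,C3)))"])
  apply (auto simp: D2_def D3_def D4_def D5_def)
  apply (rule sgp_S_eq)
   apply (simp add: endpt_def tg_def)
  apply (simp add: even_add even_mult_iff distrib_left distrib_right)
  apply argo
  done

lemma P5: "Gc3 da a db b e q w0 Y = sgp (da * e) (Hd db b da a e q w0 Y)"
  unfolding Gc3_def Hd_def gR_def fC_def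
  apply (simp only: sgp_sum sgp_sgp)
  apply (simp add: split_def sum.Sigma sgp_sum sgp_sgp)
  apply (rule sum.reindex_bij_witness[where
      j="\<lambda>((X,Yy,Z),(u,v,c1,c2,t)). ((u,v,c1,c2,t@Yy@Z),(t,Yy,Z))" and
      i="\<lambda>((U,V,C1,C2,C3),(p,m,r)). ((U@V@C1@C2@p, m, r),(U,V,C1,C2,p))"])
  apply (auto simp: D2_def D3_def D4_def D5_def)
  apply (rule sgp_S_eq)
   apply (simp add: endpt_def tg_def)
  apply (simp add: even_add even_mult_iff distrib_left distrib_right)
  apply argo
  done

lemma P6: "GB da a db b e q w0 Y = sgp (da * e) (He db b da a e q w0 Y)"
  unfolding GB_def He_def gR_def fC_def
  apply (simp only: sgp_sum sgp_sgp)
  apply (simp add: split_def sum.Sigma sgp_sum sgp_sgp)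
  apply (rule sum.reindex_bij_witness[where
      j="\<lambda>((X,Yy,Z),(u,v,c1,c2,c3)). ((X@u, v, c1, c2, c3@Z),((c3,Z),(X,u)))" and
      i="\<lambda>((U,V,C1,C2,C3),((p,m),(s,t))). ((s, t@V@C1@C2@p, m),(t,V,C1,C2,p))"])
  apply (auto simp: D2_def D3_def D4_def D5_def)
  apply (rule sgp_S_eq)
   apply (simp add: endpt_def tg_def)
  apply (simp add: even_add even_mult_iff distrib_left distrib_right)
  apply argo
  done

lemma P7: "Gc2 da a db b e q w0 Y = K2pb db b da a e q w0 Y"
  unfolding Gc2_def K2pb_def gR_def CIRC_def
  apply (simp only: sgp_sum sgp_sgp)
  apply (simp add: split_def sum.Sigma sgp_sum sgp_sgp)
  apply (rule sum.reindex_bij_witness[where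
      j="\<lambda>((X,Yy,Z),((u,v,c1,t),(s,c3))). ((u,v,c1,t@Yy@s,c3),(t,Yy,s))" and
      i="\<lambda>((U,V,C1,C2,C3),(p,m,r)). ((U@V@C1@p, m, r@C3),((U,V,C1,p),(r,C3)))"])
  apply (auto simp: D2_def D3_def D4_def D5_def)
  apply (rule sgp_S_eq)
   apply (simp add: endpt_def tg_def)
  apply (simp add: even_add even_mult_iff distrib_left distrib_right)
  apply argo
  done




lemma L3:
  "EL1H d1 a1 d2 a2 e q w0 Y - sgp (d1*d2) (EL1H d2 a2 d1 a1 e q w0 Y)
   - (K2bp d1 a1 d2 a2 e q w0 Y - sgp (d2*e) (K2pb d1 a1 d2 a2 e q w0 Y))
   + sgp (d1*d2) (K2bp d2 a2 d1 a1 e q w0 Y - sgp (d1*e) (K2pb d2 a2 d1 a1 e q w0 Y))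
   - (chain (comm d1 (d2+e) (Lie d1 a1) (rho d2 e a2 q) (w0#Y))
      - sgp (d1*d2) (chain (comm d2 (d1+e) (Lie d2 a2) (rho d1 e a1 q) (w0#Y)))) = 0"
  apply (simp only: chain_comm RHS_A RHS_B EL1H_split P1 P2 P3 P4 P5 P6 P7 P8)
  apply (cases "even d1"; cases "even d2"; cases "even e")
  apply (simp_all add: sgp_def even_add even_mult_iff)
  done




lemma rel_diff: "x \<in> tensor_rel H \<Longrightarrow> y \<in> tensor_rel H \<Longrightarrow> x - y \<in> tensor_rel H"
  using tensor_rel.add[OF _ tensor_rel.neg] by (metis diff_conv_add_uminus)
lemma rel_sum: "finite A \<Longrightarrow> (\<And>x. x \<in> A \<Longrightarrow> f x \<in> tensor_rel H) \<Longrightarrow> sum f A \<in> tensor_rel H"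
  by (induct A rule: finite_induct) (auto intro: tensor_rel.zero tensor_rel.add)
lemma rel_sgp: "x \<in> tensor_rel H \<Longrightarrow> sgp k x \<in> tensor_rel H"
  by (simp add: sgp_def tensor_rel.neg)

lemma gh_zero: "graded_homs H \<Longrightarrow> 0 \<in> H X Y d" by (simp add: graded_homs_def)
lemma gh_add: "graded_homs H \<Longrightarrow> a \<in> H X Y d \<Longrightarrow> b \<in> H X Y d \<Longrightarrow> a + b \<in> H X Y d" by (simp add: graded_homs_def)
lemma gh_neg: "graded_homs H \<Longrightarrow> a \<in> H X Y d \<Longrightarrow> - a \<in> H X Y d" by (simp add: graded_homs_def)
lemma gh_sgm: "graded_homs H \<Longrightarrow> a \<in> H X Y d \<Longrightarrow> sgm k a \<in> H X Y d" by (simp add: sgm_def gh_neg)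
lemma gh_sum: assumes "graded_homs H" "finite K" "\<And>k. k \<in> K \<Longrightarrow> f k \<in> H X Y d" shows "sum f K \<in> H X Y d"
  using assms(2,3) by (induct K rule: finite_induct) (auto intro: gh_zero[OF assms(1)] gh_add[OF assms(1)])

lemma gen': "cyc_word H (pre @ w # post) \<Longrightarrow> b \<in> H (lsrc w) (ltgt w) (ldeg w) \<Longrightarrow>
    S (pre @ w\<lparr>lval := lval w + b\<rparr> # post) - S (pre @ w # post) - S (pre @ w\<lparr>lval := b\<rparr> # post) \<in> tensor_rel H"
  unfolding S_def by (rule tensor_rel.gen)

lemma LIN0:
  assumes gh: "graded_homs H"
    and cyc: "\<And>x. x \<in> H (lsrc w) (ltgt w) (ldeg w) \<Longrightarrow> cyc_word H (pre @ w\<lparr>lval := x\<rparr> # post)"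
  shows "S (pre @ w\<lparr>lval := 0\<rparr> # post) \<in> tensor_rel H"
proof -
  have "S (pre @ (w\<lparr>lval := 0\<rparr>)\<lparr>lval := lval (w\<lparr>lval := 0\<rparr>) + 0\<rparr> # post) - S (pre @ w\<lparr>lval := 0\<rparr> # post)
     - S (pre @ (w\<lparr>lval := 0\<rparr>)\<lparr>lval := 0\<rparr> # post) \<in> tensor_rel H"
    by (rule gen') (auto intro: cyc gh_zero[OF gh])
  then have "- S (pre @ w\<lparr>lval := 0\<rparr> # post) \<in> tensor_rel H" by simp
  then show ?thesis using tensor_rel.neg by fastforce
qed

lemma LINADD:
  assumes gh: "graded_homs H"
    and cyc: "\<And>x. x \<in> H (lsrc w) (ltgt w) (ldeg w) \<Longrightarrow> cyc_word H (pre @ w\<lparr>lval := x\<rparr> # post)"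
    and x: "x \<in> H (lsrc w) (ltgt w) (ldeg w)" and y: "y \<in> H (lsrc w) (ltgt w) (ldeg w)"
  shows "S (pre @ w\<lparr>lval := x + y\<rparr> # post) - S (pre @ w\<lparr>lval := x\<rparr> # post) - S (pre @ w\<lparr>lval := y\<rparr> # post) \<in> tensor_rel H"
proof -
  have "S (pre @ (w\<lparr>lval := x\<rparr>)\<lparr>lval := lval (w\<lparr>lval := x\<rparr>) + y\<rparr> # post) - S (pre @ w\<lparr>lval := x\<rparr> # post)
     - S (pre @ (w\<lparr>lval := x\<rparr>)\<lparr>lval := y\<rparr> # post) \<in> tensor_rel H"
    by (rule gen') (auto intro: cyc x y)
  then show ?thesis by simp
qed

lemma LINSGM:
  assumes gh: "graded_homs H"
    and cyc: "\<And>x. x \<in> H (lsrc w) (ltgt w) (ldeg w) \<Longrightarrow> cyc_word H (pre @ w\<lparr>lval := x\<rparr> # post)"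
    and x: "x \<in> H (lsrc w) (ltgt w) (ldeg w)"
  shows "S (pre @ w\<lparr>lval := sgm k x\<rparr> # post) - sgp k (S (pre @ w\<lparr>lval := x\<rparr> # post)) \<in> tensor_rel H"
proof (cases "even k")
  case True then show ?thesis by (simp add: sgm_def sgp_def tensor_rel.zero)
next
  case False
  have d1: "S (pre @ w\<lparr>lval := x + - x\<rparr> # post) - S (pre @ w\<lparr>lval := x\<rparr> # post) - S (pre @ w\<lparr>lval := - x\<rparr> # post) \<in> tensor_rel H"
    by (rule LINADD[OF gh cyc]) (auto intro: x gh_neg[OF gh])
  have d0: "S (pre @ w\<lparr>lval := 0\<rparr> # post) \<in> tensor_rel H" by (rule LIN0[OF gh cyc])
  have "S (pre @ w\<lparr>lval := 0\<rparr> # post) - (S (pre @ w\<lparr>lval := x + - x\<rparr> # post) - S (pre @ w\<lparr>lval := x\<rparr> # post) - S (pre @ w\<lparr>lval := - x\<rparr> # post)) \<in> tensor_rel H"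
    by (rule rel_diff[OF d0 d1])
  then show ?thesis using False by (simp add: sgm_def sgp_def)
qed

lemma LINS:
  assumes gh: "graded_homs H"
    and cyc: "\<And>x. x \<in> H (lsrc w) (ltgt w) (ldeg w) \<Longrightarrow> cyc_word H (pre @ w\<lparr>lval := x\<rparr> # post)"
    and fin: "finite K" and vals: "\<And>k. k \<in> K \<Longrightarrow> v k \<in> H (lsrc w) (ltgt w) (ldeg w)"
  shows "S (pre @ w\<lparr>lval := \<Sum>k\<in>K. sgm (s k) (v k)\<rparr> # post) - (\<Sum>k\<in>K. sgp (s k) (S (pre @ w\<lparr>lval := v k\<rparr> # post))) \<in> tensor_rel H"
  using fin vals
proof (induct K rule: finite_induct)
  case empty then show ?case using LIN0[OF gh cyc] by simp
next
  case (insert k K)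
  let ?A = "sgm (s k) (v k)" and ?B = "\<Sum>k\<in>K. sgm (s k) (v k)"
  have vk: "v k \<in> H (lsrc w) (ltgt w) (ldeg w)" using insert by auto
  have A: "?A \<in> H (lsrc w) (ltgt w) (ldeg w)" by (rule gh_sgm[OF gh vk])
  have B: "?B \<in> H (lsrc w) (ltgt w) (ldeg w)" using insert by (auto intro!: gh_sum[OF gh] gh_sgm[OF gh])
  have 1: "S (pre @ w\<lparr>lval := ?A + ?B\<rparr> # post) - S (pre @ w\<lparr>lval := ?A\<rparr> # post) - S (pre @ w\<lparr>lval := ?B\<rparr> # post) \<in> tensor_rel H"
    by (rule LINADD[OF gh cyc A B])
  have 2: "S (pre @ w\<lparr>lval := ?A\<rparr> # post) - sgp (s k) (S (pre @ w\<lparr>lval := v k\<rparr> # post)) \<in> tensor_rel H"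
    by (rule LINSGM[OF gh cyc vk])
  have 3: "S (pre @ w\<lparr>lval := ?B\<rparr> # post) - (\<Sum>k\<in>K. sgp (s k) (S (pre @ w\<lparr>lval := v k\<rparr> # post))) \<in> tensor_rel H"
    using insert by auto
  have "(S (pre @ w\<lparr>lval := ?A + ?B\<rparr> # post) - S (pre @ w\<lparr>lval := ?A\<rparr> # post) - S (pre @ w\<lparr>lval := ?B\<rparr> # post))
      + (S (pre @ w\<lparr>lval := ?A\<rparr> # post) - sgp (s k) (S (pre @ w\<lparr>lval := v k\<rparr> # post)))
      + (S (pre @ w\<lparr>lval := ?B\<rparr> # post) - (\<Sum>k\<in>K. sgp (s k) (S (pre @ w\<lparr>lval := v k\<rparr> # post)))) \<in> tensor_rel H"
    by (intro tensor_rel.add 1 2 3)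
  moreover have "(S (pre @ w\<lparr>lval := ?A + ?B\<rparr> # post) - S (pre @ w\<lparr>lval := ?A\<rparr> # post) - S (pre @ w\<lparr>lval := ?B\<rparr> # post))
      + (S (pre @ w\<lparr>lval := ?A\<rparr> # post) - sgp (s k) (S (pre @ w\<lparr>lval := v k\<rparr> # post)))
      + (S (pre @ w\<lparr>lval := ?B\<rparr> # post) - (\<Sum>k\<in>K. sgp (s k) (S (pre @ w\<lparr>lval := v k\<rparr> # post))))
      = S (pre @ w\<lparr>lval := ?A + ?B\<rparr> # post) - (sgp (s k) (S (pre @ w\<lparr>lval := v k\<rparr> # post)) + (\<Sum>k\<in>K. sgp (s k) (S (pre @ w\<lparr>lval := v k\<rparr> # post))))"
    by (simp add: algebra_simps)
  ultimately show ?case using insert by (simp add: diff_diff_eq)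
qed

lemma cochain_add: "is_cochain H d \<phi> \<Longrightarrow> valid_word H X0 (u @ w # v) \<Longrightarrow> b \<in> H (lsrc w) (ltgt w) (ldeg w) \<Longrightarrow>
   \<phi> X0 (u @ w\<lparr>lval := lval w + b\<rparr> # v) = \<phi> X0 (u @ w # v) + \<phi> X0 (u @ w\<lparr>lval := b\<rparr> # v)"
  unfolding is_cochain_def by blast

lemma LINP:
  assumes gh: "graded_homs H" and co: "is_cochain H d \<phi>"
    and val: "\<And>x. x \<in> H (lsrc w) (ltgt w) (ldeg w) \<Longrightarrow> valid_word H Ob (pre @ w\<lparr>lval := x\<rparr> # post)"
    and fin: "finite K" and vals: "\<And>k. k \<in> K \<Longrightarrow> v k \<in> H (lsrc w) (ltgt w) (ldeg w)"
  shows "\<phi> Ob (pre @ w\<lparr>lval := \<Sum>k\<in>K. sgm (s k) (v k)\<rparr> # post) = (\<Sum>k\<in>K. sgm (s k) (\<phi> Ob (pre @ w\<lparr>lval := v k\<rparr> # post)))"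
proof -
  have add: "\<phi> Ob (pre @ w\<lparr>lval := x + y\<rparr> # post) = \<phi> Ob (pre @ w\<lparr>lval := x\<rparr> # post) + \<phi> Ob (pre @ w\<lparr>lval := y\<rparr> # post)"
    if "x \<in> H (lsrc w) (ltgt w) (ldeg w)" "y \<in> H (lsrc w) (ltgt w) (ldeg w)" for x y
    using cochain_add[OF co val[OF that(1)], of y] that by simp
  have z: "\<phi> Ob (pre @ w\<lparr>lval := 0\<rparr> # post) = 0"
    using add[OF gh_zero[OF gh] gh_zero[OF gh]] by simp
  have sg: "\<phi> Ob (pre @ w\<lparr>lval := sgm k x\<rparr> # post) = sgm k (\<phi> Ob (pre @ w\<lparr>lval := x\<rparr> # post))"
    if "x \<in> H (lsrc w) (ltgt w) (ldeg w)" for x k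
  proof (cases "even k")
    case True then show ?thesis by (simp add: sgm_def)
  next
    case False
    have "\<phi> Ob (pre @ w\<lparr>lval := x + - x\<rparr> # post) = \<phi> Ob (pre @ w\<lparr>lval := x\<rparr> # post) + \<phi> Ob (pre @ w\<lparr>lval := - x\<rparr> # post)"
      by (rule add[OF that gh_neg[OF gh that]])
    then show ?thesis using False z by (simp add: sgm_def eq_neg_iff_add_eq_0 add.commute)
  qed
  show ?thesis using fin vals
  proof (induct K rule: finite_induct)
    case empty then show ?case using z by simp
  next
    case (insert k K)
    have vk: "v k \<in> H (lsrc w) (ltgt w) (ldeg w)" using insert by auto
    have B: "(\<Sum>k\<in>K. sgm (s k) (v k)) \<in> H (lsrc w) (ltgt w) (ldeg w)" using insert by (auto intro!: gh_sum[OF gh] gh_sgm[OF gh])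
    show ?case using insert add[OF gh_sgm[OF gh vk] B] sg[OF vk] by simp
  qed
qed




lemma LINS2:
  assumes gh: "graded_homs H"
    and cyc: "\<And>x. x \<in> H (lsrc w) (ltgt w) (ldeg w) \<Longrightarrow> cyc_word H (pre @ w\<lparr>lval := x\<rparr> # post)"
    and fin: "finite K1" "finite K2" and vals1: "\<And>k. k \<in> K1 \<Longrightarrow> v1 k \<in> H (lsrc w) (ltgt w) (ldeg w)"
    and vals2: "\<And>k. k \<in> K2 \<Longrightarrow> v2 k \<in> H (lsrc w) (ltgt w) (ldeg w)"
  shows "S (pre @ w\<lparr>lval := (\<Sum>k\<in>K1. sgm (s1 k) (v1 k)) + (\<Sum>k\<in>K2. sgm (s2 k) (v2 k))\<rparr> # post)
     - ((\<Sum>k\<in>K1. sgp (s1 k) (S (pre @ w\<lparr>lval := v1 k\<rparr> # post))) + (\<Sum>k\<in>K2. sgp (s2 k) (S (pre @ w\<lparr>lval := v2 k\<rparr> # post)))) \<in> tensor_rel H"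
proof -
  have "S (pre @ w\<lparr>lval := \<Sum>k\<in>K1 <+> K2. sgm (case_sum s1 s2 k) (case_sum v1 v2 k)\<rparr> # post)
     - (\<Sum>k\<in>K1 <+> K2. sgp (case_sum s1 s2 k) (S (pre @ w\<lparr>lval := case_sum v1 v2 k\<rparr> # post))) \<in> tensor_rel H"
    by (rule LINS[OF gh cyc]) (use fin vals1 vals2 in auto)
  then show ?thesis using fin by (simp add: sum.Plus o_def)
qed

lemma LINP2:
  assumes gh: "graded_homs H" and co: "is_cochain H d \<phi>"
    and val: "\<And>x. x \<in> H (lsrc w) (ltgt w) (ldeg w) \<Longrightarrow> valid_word H Ob (pre @ w\<lparr>lval := x\<rparr> # post)"
    and fin: "finite K1" "finite K2" and vals1: "\<And>k. k \<in> K1 \<Longrightarrow> v1 k \<in> H (lsrc w) (ltgt w) (ldeg w)"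
    and vals2: "\<And>k. k \<in> K2 \<Longrightarrow> v2 k \<in> H (lsrc w) (ltgt w) (ldeg w)"
  shows "\<phi> Ob (pre @ w\<lparr>lval := (\<Sum>k\<in>K1. sgm (s1 k) (v1 k)) + (\<Sum>k\<in>K2. sgm (s2 k) (v2 k))\<rparr> # post)
     = (\<Sum>k\<in>K1. sgm (s1 k) (\<phi> Ob (pre @ w\<lparr>lval := v1 k\<rparr> # post))) + (\<Sum>k\<in>K2. sgm (s2 k) (\<phi> Ob (pre @ w\<lparr>lval := v2 k\<rparr> # post)))"
proof -
  have "\<phi> Ob (pre @ w\<lparr>lval := \<Sum>k\<in>K1 <+> K2. sgm (case_sum s1 s2 k) (case_sum v1 v2 k)\<rparr> # post)
     = (\<Sum>k\<in>K1 <+> K2. sgm (case_sum s1 s2 k) (\<phi> Ob (pre @ w\<lparr>lval := case_sum v1 v2 k\<rparr> # post)))"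
    by (rule LINP[OF gh co val]) (use fin vals1 vals2 in auto)
  then show ?thesis using fin by (simp add: sum.Plus o_def)
qed

lemma valid_word_Nil[simp]: "valid_word H Ob []" by (simp add: valid_word_def)
lemma valid_word_Cons[simp]: "valid_word H Ob (w # ws) = (lsrc w = Ob \<and> valid_letter H w \<and> valid_word H (ltgt w) ws)"
  by (auto simp: valid_word_def)
lemma endpt_Nil[simp]: "endpt Ob [] = Ob" by (simp add: endpt_def)
lemma endpt_Cons[simp]: "endpt Ob (w # ws) = endpt (ltgt w) ws" by (simp add: endpt_def)
lemma endpt_append[simp]: "endpt Ob (xs @ ys) = endpt (endpt Ob xs) ys" by (simp add: endpt_def)
lemma valid_word_append[simp]: "valid_word H Ob (xs @ ys) = (valid_word H Ob xs \<and> valid_word H (endpt Ob xs) ys)"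
  by (induct xs arbitrary: Ob) auto
lemma tg_Cons: "tg (w # xs) = endpt (ltgt w) xs"
  by (simp add: tg_def endpt_def)

lemma lsrc_app[simp]: "lsrc (app d p Ob ws) = Ob" by (simp add: app_def)
lemma lval_app[simp]: "lval (app d p Ob ws) = p Ob ws" by (simp add: app_def)

lemma valid_app: "is_cochain H d \<phi> \<Longrightarrow> valid_word H Ob ws \<Longrightarrow> valid_letter H (app d \<phi> Ob ws)"
  by (simp add: is_cochain_def valid_letter_def)

lemma valid_ins: "is_cochain H d \<phi> \<Longrightarrow> valid_word H Ob (p @ m @ r) \<Longrightarrow> valid_word H Ob (p @ app d \<phi> (endpt Ob p) m # r)"
  by (simp add: valid_app)

lemma cochain_val: "is_cochain H d \<phi> \<Longrightarrow> valid_word H Ob ws \<Longrightarrow> \<phi> Ob ws \<in> H Ob (endpt Ob ws) (d + degsum ws)"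
  by (simp add: is_cochain_def)

lemma app_upd: "endpt Ob ws = endpt Ob Z \<Longrightarrow> d' + degsum ws = d + degsum Z \<Longrightarrow> (app d F Ob Z)\<lparr>lval := \<phi> Ob ws\<rparr> = app d' \<phi> Ob ws"
  by (simp add: app_def)

lemma IDX2': "(\<Sum>i\<in>{0..length Y}. \<Sum>j\<in>{i..length Y}. g i j) = (\<Sum>(a,b,c)\<in>D3 Y. g (length a) (length a + length b))"
proof -
  have "(\<Sum>i\<in>{0..length Y}. \<Sum>j\<in>{i..length Y}. g i j) = (\<Sum>i<Suc (length Y). \<Sum>j\<in>{i..<Suc (length Y)}. g i j)"
    by (simp add: atLeast0AtMost lessThan_Suc_atMost atLeastLessThanSuc_atLeastAtMost)
  also have "\<dots> = (\<Sum>(a,b,c)\<in>D3 Y. g (length a) (length a + length b))" by (rule IDX2)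
  finally show ?thesis .
qed

lemma CIRCV: "circ db a b Ob Z = (\<Sum>(p,m,r)\<in>D3 Z. sgm (db * degsum p) (a Ob (p @ app db b (endpt Ob p) m # r)))"
  unfolding circ_def IDX2'
  apply (rule sum.cong[OF refl])
  apply (clarsimp simp: D3_def slice_def)
  done

lemma sgm_sum: "sgm k (sum f A) = (\<Sum>x\<in>A. sgm k (f x))" by (simp add: sgm_def sum_negf)
lemma sgm_sgm: "sgm a (sgm b x) = sgm (a + b) x" by (simp add: sgm_def)
lemma neg_sgm: "- sgm k x = sgm (k + 1) x" by (simp add: sgm_def)

lemma BRV: "br da db a b Ob Z = (\<Sum>(p,m,r)\<in>D3 Z. sgm (db * degsum p) (a Ob (p @ app db b (endpt Ob p) m # r)))
   + (\<Sum>(p,m,r)\<in>D3 Z. sgm (da * db + da * degsum p + 1) (b Ob (p @ app da a (endpt Ob p) m # r)))"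
  unfolding br_def CIRCV sgm_sum
  by (simp add: sgm_sgm split_def diff_conv_add_uminus sum_negf[symmetric] neg_sgm add.assoc)

lemma neg_sgp: "- sgp k x = sgp (k + 1) x" by (simp add: sgp_def)

lemma ins_endpt: "endpt Ob (p @ app d \<phi> (endpt Ob p) m # r) = endpt Ob (p @ m @ r)" by simp
lemma ins_deg: "d' + degsum (p @ app d \<phi> X0 m # r) = d' + d + degsum (p @ m @ r)" by simp

lemma BR1:
  assumes gh: "graded_homs H" and ca: "is_cochain H da a" and cb: "is_cochain H db b"
    and vZ: "valid_word H Ob Z"
    and cyc: "\<And>x. x \<in> H Ob (endpt Ob Z) (da + db + degsum Z) \<Longrightarrow> cyc_word H (pre @ (app (da+db) (br da db a b) Ob Z)\<lparr>lval := x\<rparr> # post)"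
  shows "S (pre @ app (da+db) (br da db a b) Ob Z # post)
    - (CIRC da a db b Ob Z (\<lambda>L. pre @ L # post) - sgp (da*db) (CIRC db b da a Ob Z (\<lambda>L. pre @ L # post))) \<in> tensor_rel H"
proof -
  let ?w = "app (da+db) (br da db a b) Ob Z"
  let ?s1 = "\<lambda>(p,m,r). db * degsum p" and ?v1 = "\<lambda>(p,m,r). a Ob (p @ app db b (endpt Ob p) m # r)"
  let ?s2 = "\<lambda>(p,m,r). da * db + da * degsum p + 1" and ?v2 = "\<lambda>(p,m,r). b Ob (p @ app da a (endpt Ob p) m # r)"
  have weq: "?w = ?w\<lparr>lval := (\<Sum>k\<in>D3 Z. sgm (?s1 k) (?v1 k)) + (\<Sum>k\<in>D3 Z. sgm (?s2 k) (?v2 k))\<rparr>"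
    by (simp add: BRV split_def app_def)
  have v1: "?v1 k \<in> H (lsrc ?w) (ltgt ?w) (ldeg ?w)" if kin: "k \<in> D3 Z" for k
  proof -
    obtain p m r where k: "k = (p,m,r)" "Z = p @ m @ r" using kin by (cases k) (auto simp: D3_def)
    have "valid_word H Ob (p @ app db b (endpt Ob p) m # r)" using valid_ins[OF cb] vZ k by simp
    from cochain_val[OF ca this] show ?thesis using k by (simp add: algebra_simps)
  qed
  have v2: "?v2 k \<in> H (lsrc ?w) (ltgt ?w) (ldeg ?w)" if kin: "k \<in> D3 Z" for k
  proof -
    obtain p m r where k: "k = (p,m,r)" "Z = p @ m @ r" using kin by (cases k) (auto simp: D3_def)
    have "valid_word H Ob (p @ app da a (endpt Ob p) m # r)" using valid_ins[OF ca] vZ k by simp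
    from cochain_val[OF cb this] show ?thesis using k by (simp add: algebra_simps)
  qed
  have L: "S (pre @ ?w\<lparr>lval := (\<Sum>k\<in>D3 Z. sgm (?s1 k) (?v1 k)) + (\<Sum>k\<in>D3 Z. sgm (?s2 k) (?v2 k))\<rparr> # post)
     - ((\<Sum>k\<in>D3 Z. sgp (?s1 k) (S (pre @ ?w\<lparr>lval := ?v1 k\<rparr> # post))) + (\<Sum>k\<in>D3 Z. sgp (?s2 k) (S (pre @ ?w\<lparr>lval := ?v2 k\<rparr> # post)))) \<in> tensor_rel H"
    by (rule LINS2[OF gh]) (use cyc v1 v2 in auto)
  have e1: "(\<Sum>k\<in>D3 Z. sgp (?s1 k) (S (pre @ ?w\<lparr>lval := ?v1 k\<rparr> # post))) = CIRC da a db b Ob Z (\<lambda>L. pre @ L # post)"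
    unfolding CIRC_def
    apply (rule sum.cong[OF refl])
    apply (clarsimp simp: D3_def)
    apply (subst app_upd[where d'=da]) apply simp apply (simp add: algebra_simps) apply simp
    done
  have e2: "(\<Sum>k\<in>D3 Z. sgp (?s2 k) (S (pre @ ?w\<lparr>lval := ?v2 k\<rparr> # post))) = - sgp (da*db) (CIRC db b da a Ob Z (\<lambda>L. pre @ L # post))"
    unfolding CIRC_def sgp_sum sum_negf[symmetric]
    apply (rule sum.cong[OF refl])
    apply (clarsimp simp: D3_def)
    apply (subst app_upd[where d'=db]) apply simp apply (simp add: algebra_simps)
    apply (simp only: neg_sgp sgp_sgp)
    done
  have "S (pre @ ?w # post) - (CIRC da a db b Ob Z (\<lambda>L. pre @ L # post) + - sgp (da*db) (CIRC db b da a Ob Z (\<lambda>L. pre @ L # post))) \<in> tensor_rel H"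
    using L unfolding weq[symmetric] e1 e2 .
  then show ?thesis by (simp only: diff_conv_add_uminus)
qed




lemma BR2:
  assumes gh: "graded_homs H" and ca: "is_cochain H da a" and cb: "is_cochain H db b" and cq: "is_cochain H e q"
    and vc2: "valid_word H O2 c2"
    and vO: "\<And>x. x \<in> H O2 (endpt O2 c2) (db + e + degsum c2) \<Longrightarrow> valid_word H O1 (c1 @ (app (db+e) (br db e b q) O2 c2)\<lparr>lval := x\<rparr> # c3)"
    and cyc: "\<And>y. y \<in> H O1 (endpt O1 (c1 @ app (db+e) (br db e b q) O2 c2 # c3)) (da + degsum (c1 @ app (db+e) (br db e b q) O2 c2 # c3))
        \<Longrightarrow> cyc_word H (pre @ (app da a O1 (c1 @ app (db+e) (br db e b q) O2 c2 # c3))\<lparr>lval := y\<rparr> # post)"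
  shows "S (pre @ app da a O1 (c1 @ app (db+e) (br db e b q) O2 c2 # c3) # post)
    - (CIRC db b e q O2 c2 (\<lambda>L. pre @ app da a O1 (c1 @ L # c3) # post)
       - sgp (db*e) (CIRC e q db b O2 c2 (\<lambda>L. pre @ app da a O1 (c1 @ L # c3) # post))) \<in> tensor_rel H"
proof -
  let ?B = "app (db+e) (br db e b q) O2 c2"
  let ?L = "app da a O1 (c1 @ ?B # c3)"
  let ?s1 = "\<lambda>(p,m,r). e * degsum p" and ?v1 = "\<lambda>(p,m,r). b O2 (p @ app e q (endpt O2 p) m # r)"
  let ?s2 = "\<lambda>(p,m,r). db * e + db * degsum p + 1" and ?v2 = "\<lambda>(p,m,r). q O2 (p @ app db b (endpt O2 p) m # r)"
  have Beq: "?B = ?B\<lparr>lval := (\<Sum>k\<in>D3 c2. sgm (?s1 k) (?v1 k)) + (\<Sum>k\<in>D3 c2. sgm (?s2 k) (?v2 k))\<rparr>"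
    by (simp add: BRV split_def app_def)
  have v1: "?v1 k \<in> H (lsrc ?B) (ltgt ?B) (ldeg ?B)" if kin: "k \<in> D3 c2" for k
  proof -
    obtain p m r where k: "k = (p,m,r)" "c2 = p @ m @ r" using kin by (cases k) (auto simp: D3_def)
    have "valid_word H O2 (p @ app e q (endpt O2 p) m # r)" using valid_ins[OF cq] vc2 k by simp
    from cochain_val[OF cb this] show ?thesis using k by (simp add: algebra_simps)
  qed
  have v2: "?v2 k \<in> H (lsrc ?B) (ltgt ?B) (ldeg ?B)" if kin: "k \<in> D3 c2" for k
  proof -
    obtain p m r where k: "k = (p,m,r)" "c2 = p @ m @ r" using kin by (cases k) (auto simp: D3_def)
    have "valid_word H O2 (p @ app db b (endpt O2 p) m # r)" using valid_ins[OF cb] vc2 k by simp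
    from cochain_val[OF cq this] show ?thesis using k by (simp add: algebra_simps)
  qed
  let ?V1 = "\<lambda>k. a O1 (c1 @ ?B\<lparr>lval := ?v1 k\<rparr> # c3)" and ?V2 = "\<lambda>k. a O1 (c1 @ ?B\<lparr>lval := ?v2 k\<rparr> # c3)"
  have lvalL: "a O1 (c1 @ ?B # c3) = (\<Sum>k\<in>D3 c2. sgm (?s1 k) (?V1 k)) + (\<Sum>k\<in>D3 c2. sgm (?s2 k) (?V2 k))"
    apply (subst Beq)
    apply (rule LINP2[OF gh ca])
    using vO v1 v2 by auto
  have V1: "?V1 k \<in> H (lsrc ?L) (ltgt ?L) (ldeg ?L)" if kin: "k \<in> D3 c2" for k
  proof -
    have "valid_word H O1 (c1 @ ?B\<lparr>lval := ?v1 k\<rparr> # c3)" using vO v1[OF kin] by simp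
    from cochain_val[OF ca this] show ?thesis by simp
  qed
  have V2: "?V2 k \<in> H (lsrc ?L) (ltgt ?L) (ldeg ?L)" if kin: "k \<in> D3 c2" for k
  proof -
    have "valid_word H O1 (c1 @ ?B\<lparr>lval := ?v2 k\<rparr> # c3)" using vO v2[OF kin] by simp
    from cochain_val[OF ca this] show ?thesis by simp
  qed
  have Leq: "?L = ?L\<lparr>lval := (\<Sum>k\<in>D3 c2. sgm (?s1 k) (?V1 k)) + (\<Sum>k\<in>D3 c2. sgm (?s2 k) (?V2 k))\<rparr>"
    using lvalL by (simp add: app_def)
  have LL: "S (pre @ ?L\<lparr>lval := (\<Sum>k\<in>D3 c2. sgm (?s1 k) (?V1 k)) + (\<Sum>k\<in>D3 c2. sgm (?s2 k) (?V2 k))\<rparr> # post)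
     - ((\<Sum>k\<in>D3 c2. sgp (?s1 k) (S (pre @ ?L\<lparr>lval := ?V1 k\<rparr> # post))) + (\<Sum>k\<in>D3 c2. sgp (?s2 k) (S (pre @ ?L\<lparr>lval := ?V2 k\<rparr> # post)))) \<in> tensor_rel H"
    by (rule LINS2[OF gh]) (use cyc V1 V2 in auto)
  have e1: "(\<Sum>k\<in>D3 c2. sgp (?s1 k) (S (pre @ ?L\<lparr>lval := ?V1 k\<rparr> # post))) = CIRC db b e q O2 c2 (\<lambda>L. pre @ app da a O1 (c1 @ L # c3) # post)"
    unfolding CIRC_def
    apply (rule sum.cong[OF refl])
    apply (clarsimp simp: D3_def)
    apply (subst app_upd[where d'=db]) apply simp apply (simp add: algebra_simps)
    apply (subst app_upd[where d'=da]) apply simp apply simp apply simp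
    done
  have e2: "(\<Sum>k\<in>D3 c2. sgp (?s2 k) (S (pre @ ?L\<lparr>lval := ?V2 k\<rparr> # post))) = - sgp (db*e) (CIRC e q db b O2 c2 (\<lambda>L. pre @ app da a O1 (c1 @ L # c3) # post))"
    unfolding CIRC_def sgp_sum sum_negf[symmetric]
    apply (rule sum.cong[OF refl])
    apply (clarsimp simp: D3_def)
    apply (subst app_upd[where d'=e]) apply simp apply (simp add: algebra_simps)
    apply (subst app_upd[where d'=da]) apply simp apply simp
    apply (simp only: neg_sgp sgp_sgp)
    done
  have "S (pre @ ?L # post) - (CIRC db b e q O2 c2 (\<lambda>L. pre @ app da a O1 (c1 @ L # c3) # post)
       + - sgp (db*e) (CIRC e q db b O2 c2 (\<lambda>L. pre @ app da a O1 (c1 @ L # c3) # post))) \<in> tensor_rel H"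
    using LL unfolding Leq[symmetric] e1 e2 .
  then show ?thesis by (simp only: diff_conv_add_uminus)
qed




lemma cyc_facts:
  assumes "cyc_word H (w0 # Y)"
  shows "valid_letter H w0" "valid_word H (ltgt w0) Y" "endpt (ltgt w0) Y = lsrc w0"
  using assms by (auto simp: cyc_word_def valid_word_def[symmetric] endpt_def last_ConsR split: if_splits)

lemma R1:
  assumes gh: "graded_homs H" and ca: "is_cochain H da a" and cb: "is_cochain H db b" and cq: "is_cochain H e q"
    and cyc: "cyc_word H (w0 # Y)"
  shows "chain (rho (da+db) e (br da db a b) q (w0 # Y))
    - (EL1H da a db b e q w0 Y - sgp (da*db) (EL1H db b da a e q w0 Y)) \<in> tensor_rel H"
proof -
  note cf = cyc_facts[OF cyc]
  have "chain (rho (da+db) e (br da db a b) q (w0 # Y))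
    - (EL1H da a db b e q w0 Y - sgp (da*db) (EL1H db b da a e q w0 Y))
    = (\<Sum>(u,v,c1,c2,c3)\<in>D5 Y. sgp (e * degsum c1 + degsum (w0#u@v) * degsum (c1@c2@c3))
       (S ([] @ app (da+db) (br da db a b) (tg (w0#u@v)) (c1 @ app e q (tg (w0#u@v@c1)) c2 # c3 @ w0 # u) # v)
        - (CIRC da a db b (tg (w0#u@v)) (c1 @ app e q (tg (w0#u@v@c1)) c2 # c3 @ w0 # u) (\<lambda>L. [] @ L # v)
           - sgp (da*db) (CIRC db b da a (tg (w0#u@v)) (c1 @ app e q (tg (w0#u@v@c1)) c2 # c3 @ w0 # u) (\<lambda>L. [] @ L # v)))))"
    unfolding RHO_chain EL1H_def gR_def
    by (simp add: sgp_sum sgp_diff sgp_sgp sum_subtractf split_def add.commute)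
  also have "\<dots> \<in> tensor_rel H"
  proof (rule rel_sum[OF finite_D5], clarify, rule rel_sgp, rule BR1[OF gh ca cb])
    fix u v c1 c2 c3 assume "(u,v,c1,c2,c3) \<in> D5 Y"
    then have Y: "Y = u @ v @ c1 @ c2 @ c3" by (simp add: D5_def)
    show "valid_word H (tg (w0#u@v)) (c1 @ app e q (tg (w0#u@v@c1)) c2 # c3 @ w0 # u)"
      using cf Y by (simp add: tg_Cons valid_app[OF cq])
    fix x assume "x \<in> H (tg (w0#u@v)) (endpt (tg (w0#u@v)) (c1 @ app e q (tg (w0#u@v@c1)) c2 # c3 @ w0 # u))
        (da + db + degsum (c1 @ app e q (tg (w0#u@v@c1)) c2 # c3 @ w0 # u))"
    then show "cyc_word H ([] @ (app (da+db) (br da db a b) (tg (w0#u@v)) (c1 @ app e q (tg (w0#u@v@c1)) c2 # c3 @ w0 # u))\<lparr>lval := x\<rparr> # v)"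
      using cf Y by (auto simp: tg_Cons cyc_word_def valid_letter_def app_def endpt_def split: if_splits)
  qed
  finally show ?thesis .
qed

lemma R2:
  assumes gh: "graded_homs H" and ca: "is_cochain H da a" and cb: "is_cochain H db b" and cq: "is_cochain H e q"
    and cyc: "cyc_word H (w0 # Y)"
  shows "chain (rho da (db+e) a (br db e b q) (w0 # Y))
    - (K2bp da a db b e q w0 Y - sgp (db*e) (K2pb da a db b e q w0 Y)) \<in> tensor_rel H"
proof -
  note cf = cyc_facts[OF cyc]
  have "chain (rho da (db+e) a (br db e b q) (w0 # Y))
    - (K2bp da a db b e q w0 Y - sgp (db*e) (K2pb da a db b e q w0 Y))
    = (\<Sum>(u,v,c1,c2,c3)\<in>D5 Y. sgp ((db + e) * degsum c1 + degsum (w0#u@v) * degsum (c1@c2@c3))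
       (S ([] @ app da a (tg (w0#u@v)) (c1 @ app (db+e) (br db e b q) (tg (w0#u@v@c1)) c2 # (c3 @ w0 # u)) # v)
        - (CIRC db b e q (tg (w0#u@v@c1)) c2 (\<lambda>L. [] @ app da a (tg (w0#u@v)) (c1 @ L # (c3 @ w0 # u)) # v)
           - sgp (db*e) (CIRC e q db b (tg (w0#u@v@c1)) c2 (\<lambda>L. [] @ app da a (tg (w0#u@v)) (c1 @ L # (c3 @ w0 # u)) # v)))))"
    unfolding RHO_chain K2bp_def K2pb_def gR_def
    by (simp add: sgp_sum sgp_diff sgp_sgp sum_subtractf split_def add.commute)
  also have "\<dots> \<in> tensor_rel H"
  proof (rule rel_sum[OF finite_D5], clarify, rule rel_sgp, rule BR2[OF gh ca cb cq])
    fix u v c1 c2 c3 assume "(u,v,c1,c2,c3) \<in> D5 Y"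
    then have Y: "Y = u @ v @ c1 @ c2 @ c3" by (simp add: D5_def)
    show "valid_word H (tg (w0#u@v@c1)) c2"
      using cf Y by (simp add: tg_Cons)
    fix x assume "x \<in> H (tg (w0#u@v@c1)) (endpt (tg (w0#u@v@c1)) c2) (db + e + degsum c2)"
    then show "valid_word H (tg (w0#u@v)) (c1 @ (app (db+e) (br db e b q) (tg (w0#u@v@c1)) c2)\<lparr>lval := x\<rparr> # c3 @ w0 # u)"
      using cf Y by (simp add: tg_Cons valid_letter_def app_def)
  next
    fix u v c1 c2 c3 assume "(u,v,c1,c2,c3) \<in> D5 Y"
    then have Y: "Y = u @ v @ c1 @ c2 @ c3" by (simp add: D5_def)
    fix y assume "y \<in> H (tg (w0#u@v)) (endpt (tg (w0#u@v)) (c1 @ app (db+e) (br db e b q) (tg (w0#u@v@c1)) c2 # c3 @ w0 # u))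
        (da + degsum (c1 @ app (db+e) (br db e b q) (tg (w0#u@v@c1)) c2 # c3 @ w0 # u))"
    then show "cyc_word H ([] @ (app da a (tg (w0#u@v)) (c1 @ app (db+e) (br db e b q) (tg (w0#u@v@c1)) c2 # c3 @ w0 # u))\<lparr>lval := y\<rparr> # v)"
      using cf Y by (auto simp: tg_Cons cyc_word_def valid_letter_def app_def endpt_def split: if_splits)
  qed
  finally show ?thesis .
qed

theorem proposition6p2:
  fixes H :: "'o \<Rightarrow> 'o \<Rightarrow> int \<Rightarrow> 'm::ab_group_add set"
    and \<phi>1 \<phi>2 \<psi> :: "('o, 'm) cochain"
    and d1 d2 e :: int
    and X :: "('o, 'm) letter list"
  assumes "graded_homs H"
    and "is_cochain H d1 \<phi>1" and "is_cochain H d2 \<phi>2" and "is_cochain H e \<psi>"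
    and "cyc_word H X"
  shows "chain (rho (d1 + d2) e (br d1 d2 \<phi>1 \<phi>2) \<psi> X)
         - chain (rho d1 (d2 + e) \<phi>1 (br d2 e \<phi>2 \<psi>) X)
         + chain (scale (sg (d1 * d2)) (rho d2 (d1 + e) \<phi>2 (br d1 e \<phi>1 \<psi>) X))
         - (chain (comm d1 (d2 + e) (Lie d1 \<phi>1) (rho d2 e \<phi>2 \<psi>) X)
            - chain (scale (sg (d1 * d2)) (comm d2 (d1 + e) (Lie d2 \<phi>2) (rho d1 e \<phi>1 \<psi>) X)))
         \<in> tensor_rel H"
proof -
  obtain w0 Y where X: "X = w0 # Y" using assms(5) by (cases X) (auto simp: cyc_word_def)
  note cyc = assms(5)[unfolded X]
  note r1 = R1[OF assms(1) assms(2) assms(3) assms(4) cyc]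
  note r2 = R2[OF assms(1) assms(2) assms(3) assms(4) cyc]
  note r3 = R2[OF assms(1) assms(3) assms(2) assms(4) cyc]
  note l3 = L3[of d1 \<phi>1 d2 \<phi>2 e \<psi> w0 Y]
  have "(chain (rho (d1+d2) e (br d1 d2 \<phi>1 \<phi>2) \<psi> (w0 # Y))
        - (EL1H d1 \<phi>1 d2 \<phi>2 e \<psi> w0 Y - sgp (d1*d2) (EL1H d2 \<phi>2 d1 \<phi>1 e \<psi> w0 Y)))
      - (chain (rho d1 (d2+e) \<phi>1 (br d2 e \<phi>2 \<psi>) (w0 # Y))
        - (K2bp d1 \<phi>1 d2 \<phi>2 e \<psi> w0 Y - sgp (d2*e) (K2pb d1 \<phi>1 d2 \<phi>2 e \<psi> w0 Y)))
      + sgp (d1*d2) (chain (rho d2 (d1+e) \<phi>2 (br d1 e \<phi>1 \<psi>) (w0 # Y))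
        - (K2bp d2 \<phi>2 d1 \<phi>1 e \<psi> w0 Y - sgp (d1*e) (K2pb d2 \<phi>2 d1 \<phi>1 e \<psi> w0 Y))) \<in> tensor_rel H"
    by (intro tensor_rel.add rel_diff rel_sgp r1 r2 r3)
  moreover have "(chain (rho (d1+d2) e (br d1 d2 \<phi>1 \<phi>2) \<psi> (w0 # Y))
        - (EL1H d1 \<phi>1 d2 \<phi>2 e \<psi> w0 Y - sgp (d1*d2) (EL1H d2 \<phi>2 d1 \<phi>1 e \<psi> w0 Y)))
      - (chain (rho d1 (d2+e) \<phi>1 (br d2 e \<phi>2 \<psi>) (w0 # Y))
        - (K2bp d1 \<phi>1 d2 \<phi>2 e \<psi> w0 Y - sgp (d2*e) (K2pb d1 \<phi>1 d2 \<phi>2 e \<psi> w0 Y)))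
      + sgp (d1*d2) (chain (rho d2 (d1+e) \<phi>2 (br d1 e \<phi>1 \<psi>) (w0 # Y))
        - (K2bp d2 \<phi>2 d1 \<phi>1 e \<psi> w0 Y - sgp (d1*e) (K2pb d2 \<phi>2 d1 \<phi>1 e \<psi> w0 Y)))
      = chain (rho (d1 + d2) e (br d1 d2 \<phi>1 \<phi>2) \<psi> X)
         - chain (rho d1 (d2 + e) \<phi>1 (br d2 e \<phi>2 \<psi>) X)
         + chain (scale (sg (d1 * d2)) (rho d2 (d1 + e) \<phi>2 (br d1 e \<phi>1 \<psi>) X))
         - (chain (comm d1 (d2 + e) (Lie d1 \<phi>1) (rho d2 e \<phi>2 \<psi>) X)
            - chain (scale (sg (d1 * d2)) (comm d2 (d1 + e) (Lie d2 \<phi>2) (rho d1 e \<phi>1 \<psi>) X)))"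
    using l3 unfolding X chain_scale_sg
    by (simp add: sgp_diff sgp_add algebra_simps eq_diff_eq)
  ultimately show ?thesis by simp
qed


end
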